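(* Fix $\mu\in(0,\mu_0]$. Let $H(t,\mu)$ be a Hermitian $2\times2$ matrix solution of the boundary value problem $$\frac{d}{dt}H+HA(t,\mu)+A^*(t,\mu)H=-I,\quad 0\le t\le T,\qquad H(0,\mu)=H(T,\mu)>0,$$ and put $h_{\max}(\mu)=\max_{0\le t\le T}\|H(t,\mu)\|$. Let $\Delta\alpha,\Delta\hat\beta\in\mathbb{R}$ be constants and $\Delta\hat\varphi:[0,\infty)\to\mathbb{R}$ a bounded continuous function such that $$\mu\sup_{t\ge0}|\Delta\hat\varphi(t)|<\frac{1}{4h_{\max}(\mu)},\qquad \mu\big(|\Delta\hat\beta|\mu+|\Delta\alpha|\big)<\frac{1}{4h_{\max}(\mu)}.$$ Then the zero solution of the perturbed equation $$\bar y''+(\alpha+\Delta\alpha)\mu\bar y'+\big((\hat\beta+\Delta\hat\beta)\mu^2+\mu(\hat\varphi(t)+\Delta\hat\varphi(t))\big)\bar y=0,\qquad t>0,$$ is asymptotically stable.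
   Context: Let $T>0$, $\alpha>0$, $\hat\beta<0$ be constants and $\hat\varphi:\mathbb{R}\to\mathbb{R}$ a continuous $T$-periodic function with $\int_0^T\hat\varphi(s)\,ds=0$ satisfying $$\frac{1}{T}\int_0^T\Big(\int_0^\tau\hat\varphi(s)\,ds\Big)^2d\tau>\Big(\frac{1}{T}\int_0^T\tau\,\hat\varphi(\tau)\,d\tau\Big)^2-\hat\beta .$$ For $\mu>0$ let $A(t,\mu)=\begin{pmatrix}0&1\\-(\hat\beta\mu^2+\mu\hat\varphi(t))&-\alpha\mu\end{pmatrix}$, so that the equation $y''+\alpha\mu y'+(\hat\beta\mu^2+\mu\hat\varphi(t))y=0$ is equivalent to $v'=A(t,\mu)v$ with $v=(y,y')^T$. Let $\mu_0>0$ be a number such that the zero solution of this equation is asymptotically stable for every $\mu\in(0,\mu_0]$ (such a number exists). $\|\cdot\|$ denotes the Euclidean vector norm and the induced (spectral) matrix norm; $A^*$ is the conjugate transpose. *)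

theory Defs
  imports "HOL-Analysis.Analysis"
begin

text \<open>The coefficient matrix A(t,mu) of the first-order system equivalent to
  y'' + alpha mu y' + (beta mu^2 + mu phi(t)) y = 0, as a complex 2x2 matrix.\<close>
definition Amat :: "real \<Rightarrow> real \<Rightarrow> (real \<Rightarrow> real) \<Rightarrow> real \<Rightarrow> real \<Rightarrow> complex^2^2" where
  "Amat alpha beta phi t mu =
     vector [vector [0, 1],
             vector [complex_of_real (-(beta * mu^2 + mu * phi t)), complex_of_real (-(alpha * mu))]]"

definition adj :: "complex^'n^'m \<Rightarrow> complex^'m^'n" where
  "adj M = (\<chi> i j. cnj (M $ j $ i))"

definition hermitian :: "complex^'n^'n \<Rightarrow> bool" where
  "hermitian M \<longleftrightarrow> adj M = M"

definition pos_def :: "complex^'n^'n \<Rightarrow> bool" where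
  "pos_def M \<longleftrightarrow> hermitian M \<and>
     (\<forall>v::complex^'n. v \<noteq> 0 \<longrightarrow> Re (\<Sum>i\<in>UNIV. cnj (v $ i) * (M *v v) $ i) > 0)"

definition spec_norm :: "complex^'n^'m \<Rightarrow> real" where
  "spec_norm M = onorm (\<lambda>v::complex^'n. M *v v)"

text \<open>(y,z) solves y' = z, z' = -p(t) z - q(t) y on [t0,\<infinity>), i.e. y solves
  y'' + p(t) y' + q(t) y = 0 for t \<ge> t0 with z = y'.\<close>
definition sol2 :: "(real \<Rightarrow> real) \<Rightarrow> (real \<Rightarrow> real) \<Rightarrow> real \<Rightarrow> (real \<Rightarrow> real) \<Rightarrow> (real \<Rightarrow> real) \<Rightarrow> bool" where
  "sol2 p q t0 y z \<longleftrightarrow>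
     (\<forall>t\<ge>t0. (y has_real_derivative z t) (at t within {t0..}) \<and>
             (z has_real_derivative (- p t * z t - q t * y t)) (at t within {t0..}))"

definition asymp_stable2 :: "(real \<Rightarrow> real) \<Rightarrow> (real \<Rightarrow> real) \<Rightarrow> bool" where
  "asymp_stable2 p q \<longleftrightarrow>
     (\<forall>t0\<ge>0.
        (\<forall>\<epsilon>>0. \<exists>\<delta>>0. \<forall>y z. sol2 p q t0 y z \<and> norm (y t0, z t0) < \<delta> \<longrightarrow>
              (\<forall>t\<ge>t0. norm (y t, z t) < \<epsilon>)) \<and>
        (\<exists>\<delta>>0. \<forall>y z. sol2 p q t0 y z \<and> norm (y t0, z t0) < \<delta> \<longrightarrow>
              ((\<lambda>t. (y t, z t)) \<longlongrightarrow> 0) at_top))"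

end

theory Submission
  imports Defs "HOL-Analysis.Analysis"
begin

lemma nonincr:
  fixes f f' :: "real \<Rightarrow> real"
  assumes ab: "a \<le> b"
    and d: "\<And>x. x \<in> {a..b} \<Longrightarrow> (f has_real_derivative f' x) (at x within {a..b})"
    and n: "\<And>x. x \<in> {a..b} \<Longrightarrow> f' x \<le> 0"
  shows "f b \<le> f a"
proof (rule DERIV_nonpos_imp_decreasing_open[OF ab])
  fix x assume x: "a < x" "x < b"
  have "(f has_real_derivative f' x) (at x)"
    using d[of x] x by (simp add: at_within_Icc_at)
  then show "\<exists>y. (f has_real_derivative y) (at x) \<and> y \<le> 0" using n[of x] x by auto
next
  show "continuous_on {a..b} f"
    unfolding continuous_on_eq_continuous_within
    using d DERIV_continuous by blast
qed

lemma nonincr_pt: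
  fixes f f' :: "real \<Rightarrow> real"
  assumes d: "\<And>x. x \<in> {a..b} \<Longrightarrow> (f has_real_derivative f' x) (at x within {a..b})"
    and n: "\<And>x. x \<in> {a..b} \<Longrightarrow> f' x \<le> 0"
    and s: "s \<in> {a..b}"
  shows "f s \<le> f a"
proof (rule nonincr[of a s f f'])
  show "a \<le> s" using s by auto
  fix x assume x: "x \<in> {a..s}"
  then have "x \<in> {a..b}" using s by auto
  then show "(f has_real_derivative f' x) (at x within {a..s})"
    using d has_field_derivative_subset[of f "f' x" x "{a..b}" "{a..s}"] s by auto
  show "f' x \<le> 0" using n \<open>x \<in> {a..b}\<close> by auto
qed

lemma gronwall2:
  fixes N N' :: "real \<Rightarrow> real"
  assumes d: "\<And>x. x \<in> {a..b} \<Longrightarrow> (N has_real_derivative N' x) (at x within {a..b})"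
    and bd: "\<And>x. x \<in> {a..b} \<Longrightarrow> \<bar>N' x\<bar> \<le> L * N x"
    and s: "s \<in> {a..b}"
  shows "N s \<le> exp (L * (s - a)) * N a" and "exp (- (L * (s - a))) * N a \<le> N s"
proof -
  have "(\<lambda>x. N x * exp (- L * x)) s \<le> (\<lambda>x. N x * exp (- L * x)) a"
  proof (rule nonincr_pt[OF _ _ s])
    fix x assume x: "x \<in> {a..b}"
    show "((\<lambda>x. N x * exp (- L * x)) has_real_derivative
            N' x * exp (- L * x) + N x * (exp (- L * x) * (- L))) (at x within {a..b})"
      by (auto intro!: derivative_eq_intros d[OF x])
    have "N' x \<le> L * N x" using bd[OF x] by auto
    then show "N' x * exp (- L * x) + N x * (exp (- L * x) * (- L)) \<le> 0"
      by (simp add: algebra_simps mult_right_mono)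
  qed
  then have "N s * exp (- L * s) \<le> N a * exp (- L * a)" by simp
  then have "N s * exp (- L * s) * exp (L * s) \<le> N a * exp (- L * a) * exp (L * s)"
    by (simp add: mult_right_mono)
  then show "N s \<le> exp (L * (s - a)) * N a"
    by (simp add: mult.assoc flip: exp_add) (simp add: algebra_simps)
  have "(\<lambda>x. - (N x * exp (L * x))) s \<le> (\<lambda>x. - (N x * exp (L * x))) a"
  proof (rule nonincr_pt[OF _ _ s])
    fix x assume x: "x \<in> {a..b}"
    show "((\<lambda>x. - (N x * exp (L * x))) has_real_derivative
            - (N' x * exp (L * x) + N x * (exp (L * x) * L))) (at x within {a..b})"
      by (auto intro!: derivative_eq_intros d[OF x])
    have "- N' x \<le> L * N x" using bd[OF x] by auto
    from mult_right_mono[OF this, of "exp (L * x)"]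
    show "- (N' x * exp (L * x) + N x * (exp (L * x) * L)) \<le> 0"
      by (simp add: algebra_simps)
  qed
  then have "N a * exp (L * a) \<le> N s * exp (L * s)" by simp
  then have "N a * exp (L * a) * exp (- L * s) \<le> N s * exp (L * s) * exp (- L * s)"
    by (simp add: mult_right_mono)
  then show "exp (- (L * (s - a))) * N a \<le> N s"
    by (simp add: mult.assoc flip: exp_add) (simp add: algebra_simps)
qed


lemma shift_deriv:
  fixes f f' :: "real \<Rightarrow> real"
  assumes d: "\<And>s. s \<in> {0..T} \<Longrightarrow> (f has_real_derivative f' s) (at s within {0..T})"
    and s: "s \<in> {a..a+T}"
  shows "((\<lambda>s. f (s - a)) has_real_derivative f' (s - a)) (at s within {a..a+T})"
proof -
  have im: "(\<lambda>s. s - a) ` {a..a+T} = {0..T}"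
    by (simp add: image_minus_const_atLeastAtMost')
  have "(f has_real_derivative f' (s - a)) (at ((\<lambda>s. s - a) s) within (\<lambda>s. s - a) ` {a..a+T})"
    unfolding im using d[of "s - a"] s by auto
  note fd = this
  have g: "((\<lambda>s. s - a) has_real_derivative 1) (at s within {a..a+T})"
    by (auto intro!: derivative_eq_intros)
  from DERIV_image_chain[OF fd g] show ?thesis
    by (simp add: o_def)
qed

lemma piece:
  fixes p q r p' q' r' k y z P Q :: "real \<Rightarrow> real"
  assumes T: "T > 0"
  and dp: "\<And>s. s \<in> {0..T} \<Longrightarrow> (p has_real_derivative p' s) (at s within {0..T})"
  and dq: "\<And>s. s \<in> {0..T} \<Longrightarrow> (q has_real_derivative q' s) (at s within {0..T})"
  and dr: "\<And>s. s \<in> {0..T} \<Longrightarrow> (r has_real_derivative r' s) (at s within {0..T})"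
  and ip: "\<And>s. s \<in> {0..T} \<Longrightarrow> p' s = -1 + 2 * q s * k s"
  and iq: "\<And>s. s \<in> {0..T} \<Longrightarrow> q' s = - p s + q s * c + r s * k s"
  and ir: "\<And>s. s \<in> {0..T} \<Longrightarrow> r' s = -1 - 2 * q s + 2 * r s * c"
  and hb: "\<And>s u v. s \<in> {0..T} \<Longrightarrow> \<bar>q s * u + r s * v\<bar> \<le> h * sqrt (u\<^sup>2 + v\<^sup>2)"
  and h: "h \<ge> 0"
  and dy: "\<And>s. s \<in> {a..a+T} \<Longrightarrow> (y has_real_derivative z s) (at s within {a..a+T})"
  and dz: "\<And>s. s \<in> {a..a+T} \<Longrightarrow> (z has_real_derivative (- P s * z s - Q s * y s)) (at s within {a..a+T})"
  and D: "\<And>s. s \<in> {a..a+T} \<Longrightarrow> \<bar>P s - c\<bar> + \<bar>Q s - k (s - a)\<bar> \<le> D"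
  and hD: "2 * h * D \<le> 1 - \<delta>"
  and del: "\<delta> \<ge> 0"
  and low: "\<And>s. s \<in> {a..a+T} \<Longrightarrow> \<gamma> * ((y a)\<^sup>2 + (z a)\<^sup>2) \<le> (y s)\<^sup>2 + (z s)\<^sup>2"
  shows "p T * (y (a+T))\<^sup>2 + 2 * q T * y (a+T) * z (a+T) + r T * (z (a+T))\<^sup>2
         \<le> p 0 * (y a)\<^sup>2 + 2 * q 0 * y a * z a + r 0 * (z a)\<^sup>2 - \<delta> * \<gamma> * T * ((y a)\<^sup>2 + (z a)\<^sup>2)"
proof -
  define C where "C = \<delta> * \<gamma> * ((y a)\<^sup>2 + (z a)\<^sup>2)"
  define W where "W s = p (s - a) * (y s)\<^sup>2 + 2 * q (s - a) * y s * z s + r (s - a) * (z s)\<^sup>2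
      + C * (s - a)" for s
  define W' where "W' s = - ((y s)\<^sup>2 + (z s)\<^sup>2) + 2 * (q (s - a) * y s + r (s - a) * z s)
      * (- (P s - c) * z s - (Q s - k (s - a)) * y s) + C" for s
  have "W (a + T) \<le> W a"
  proof (rule nonincr[of a "a+T" W W'])
    show "a \<le> a + T" using T by simp
    fix s assume s: "s \<in> {a..a+T}"
    then have s0: "s - a \<in> {0..T}" by auto
    note dps = shift_deriv[OF dp s] and dqs = shift_deriv[OF dq s] and drs = shift_deriv[OF dr s]
    have "(W has_real_derivative
            p' (s - a) * (y s)\<^sup>2 + p (s - a) * (2 * y s * z s)
          + 2 * (q' (s - a) * y s * z s + q (s - a) * z s * z s + q (s - a) * y s * (- P s * z s - Q s * y s))
          + r' (s - a) * (z s)\<^sup>2 + r (s - a) * (2 * z s * (- P s * z s - Q s * y s)) + C)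
          (at s within {a..a+T})"
      unfolding W_def
      by (rule derivative_eq_intros dps dqs drs dy[OF s] dz[OF s] refl | simp add: algebra_simps)+
    then show "(W has_real_derivative W' s) (at s within {a..a+T})"
      unfolding W'_def using ip[OF s0] iq[OF s0] ir[OF s0]
      by (simp add: power2_eq_square algebra_simps)
    show "W' s \<le> 0"
    proof -
      define Y where "Y = y s"
      define Z where "Z = z s"
      define S where "S = sqrt (Y\<^sup>2 + Z\<^sup>2)"
      define w where "w = - (P s - c) * Z - (Q s - k (s - a)) * Y"
      have SS: "S * S = Y\<^sup>2 + Z\<^sup>2" unfolding S_def by simp
      have S0: "S \<ge> 0" unfolding S_def by simp
      have YS: "\<bar>Y\<bar> \<le> S" unfolding S_def by (simp add: real_le_rsqrt)
      have ZS: "\<bar>Z\<bar> \<le> S" unfolding S_def by (simp add: real_le_rsqrt)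
      have "\<bar>w\<bar> \<le> \<bar>P s - c\<bar> * \<bar>Z\<bar> + \<bar>Q s - k (s - a)\<bar> * \<bar>Y\<bar>"
        unfolding w_def using abs_triangle_ineq4[of "- (P s - c) * Z" "(Q s - k (s - a)) * Y"]
        by (simp only: abs_mult abs_minus_cancel mult_minus_left)
      also have "\<dots> \<le> \<bar>P s - c\<bar> * S + \<bar>Q s - k (s - a)\<bar> * S"
        by (intro add_mono mult_left_mono YS ZS) auto
      also have "\<dots> \<le> D * S" using D[OF s] S0 by (simp add: distrib_right[symmetric] mult_right_mono)
      finally have wb: "\<bar>w\<bar> \<le> D * S" .
      have qb: "\<bar>q (s - a) * Y + r (s - a) * Z\<bar> \<le> h * S" unfolding S_def using hb[OF s0] .
      have "\<bar>2 * (q (s - a) * Y + r (s - a) * Z) * w\<bar> \<le> 2 * (h * S) * (D * S)"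
        unfolding abs_mult using qb wb by (intro mult_mono) auto
      also have "\<dots> = (2 * h * D) * (Y\<^sup>2 + Z\<^sup>2)" by (simp flip: SS)
      also have "\<dots> \<le> (1 - \<delta>) * (Y\<^sup>2 + Z\<^sup>2)" using hD by (intro mult_right_mono) auto
      finally have E: "\<bar>2 * (q (s - a) * Y + r (s - a) * Z) * w\<bar> \<le> (1 - \<delta>) * (Y\<^sup>2 + Z\<^sup>2)" .
      have "C \<le> \<delta> * (Y\<^sup>2 + Z\<^sup>2)"
        unfolding C_def Y_def Z_def using mult_left_mono[OF low[OF s] del] by (simp add: mult.assoc)
      then show ?thesis using E unfolding W'_def Y_def[symmetric] Z_def[symmetric] w_def[symmetric]
        by (simp add: algebra_simps abs_le_iff)
    qed
  qed
  then show ?thesis unfolding W_def C_def using T by (simp add: algebra_simps)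
qed


lemma N_deriv_bound:
  fixes y z P Q Pb Qb :: real
  assumes "\<bar>P\<bar> \<le> Pb" "\<bar>Q\<bar> \<le> Qb"
  shows "\<bar>2 * y * z + 2 * z * (- P * z - Q * y)\<bar> \<le> (1 + Qb + 2 * Pb) * (y\<^sup>2 + z\<^sup>2)"
proof -
  have a: "\<bar>2 * y * z\<bar> \<le> y\<^sup>2 + z\<^sup>2"
  proof -
    have "0 \<le> (y - z)\<^sup>2" "0 \<le> (y + z)\<^sup>2" by auto
    then have "0 \<le> y\<^sup>2 + z\<^sup>2 - 2 * y * z" "0 \<le> y\<^sup>2 + z\<^sup>2 + 2 * y * z"
      by (simp_all add: power2_diff power2_sum)
    then show ?thesis by (simp add: abs_le_iff)
  qed
  have b: "\<bar>2 * z * (Q * y)\<bar> \<le> Qb * (y\<^sup>2 + z\<^sup>2)"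
  proof -
    have "\<bar>2 * z * (Q * y)\<bar> = \<bar>Q\<bar> * \<bar>2 * y * z\<bar>" by (simp add: abs_mult)
    also have "\<dots> \<le> Qb * (y\<^sup>2 + z\<^sup>2)" using a assms(2) by (intro mult_mono) auto
    finally show ?thesis .
  qed
  have c: "\<bar>2 * z * (P * z)\<bar> \<le> 2 * Pb * (y\<^sup>2 + z\<^sup>2)"
  proof -
    have "\<bar>2 * z * (P * z)\<bar> = 2 * \<bar>P\<bar> * z\<^sup>2" by (simp add: abs_mult power2_eq_square)
    also have "\<dots> \<le> 2 * Pb * (y\<^sup>2 + z\<^sup>2)" using assms(1) by (intro mult_mono) auto
    finally show ?thesis .
  qed
  have "2 * y * z + 2 * z * (- P * z - Q * y) = 2 * y * z - 2 * z * (P * z) - 2 * z * (Q * y)"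
    by (simp add: algebra_simps)
  then show ?thesis using a b c by (simp add: abs_le_iff algebra_simps)
qed

lemma core:
  fixes p q r p' q' r' k y z P Q :: "real \<Rightarrow> real"
  assumes T: "T > 0"
  and dp: "\<And>s. s \<in> {0..T} \<Longrightarrow> (p has_real_derivative p' s) (at s within {0..T})"
  and dq: "\<And>s. s \<in> {0..T} \<Longrightarrow> (q has_real_derivative q' s) (at s within {0..T})"
  and dr: "\<And>s. s \<in> {0..T} \<Longrightarrow> (r has_real_derivative r' s) (at s within {0..T})"
  and ip: "\<And>s. s \<in> {0..T} \<Longrightarrow> p' s = -1 + 2 * q s * k s"
  and iq: "\<And>s. s \<in> {0..T} \<Longrightarrow> q' s = - p s + q s * c + r s * k s"
  and ir: "\<And>s. s \<in> {0..T} \<Longrightarrow> r' s = -1 - 2 * q s + 2 * r s * c"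
  and per: "p T = p 0" "q T = q 0" "r T = r 0"
  and hb: "\<And>s u v. s \<in> {0..T} \<Longrightarrow> \<bar>q s * u + r s * v\<bar> \<le> h * sqrt (u\<^sup>2 + v\<^sup>2)"
  and h: "h > 0"
  and F0: "\<And>u v. m0 * (u\<^sup>2 + v\<^sup>2) \<le> p 0 * u\<^sup>2 + 2 * q 0 * u * v + r 0 * v\<^sup>2"
          "\<And>u v. p 0 * u\<^sup>2 + 2 * q 0 * u * v + r 0 * v\<^sup>2 \<le> h * (u\<^sup>2 + v\<^sup>2)"
  and m0: "m0 > 0"
  and D: "\<And>n s. real n * T \<le> s \<Longrightarrow> s \<le> real n * T + T \<Longrightarrow> t0 \<le> s \<Longrightarrow>
             \<bar>P s - c\<bar> + \<bar>Q s - k (s - real n * T)\<bar> \<le> D"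
  and hD: "2 * h * D \<le> 1 - \<delta>"
  and del: "\<delta> > 0"
  and Pb: "\<And>s. s \<ge> t0 \<Longrightarrow> \<bar>P s\<bar> \<le> Pb"
  and Qb: "\<And>s. s \<ge> t0 \<Longrightarrow> \<bar>Q s\<bar> \<le> Qb"
  and t0: "t0 \<ge> 0"
  and sol: "sol2 P Q t0 y z"
  shows "\<forall>t\<ge>t0. (y t)\<^sup>2 + (z t)\<^sup>2 \<le> (exp ((1 + Qb + 2 * Pb) * T) + exp ((1 + Qb + 2 * Pb) * T) * exp ((1 + Qb + 2 * Pb) * T) * h / m0) * ((y t0)\<^sup>2 + (z t0)\<^sup>2)"
    and "((\<lambda>t. (y t)\<^sup>2 + (z t)\<^sup>2) \<longlongrightarrow> 0) at_top"
proof -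
  define L where "L = 1 + Qb + 2 * Pb"
  define E where "E = exp (L * T)"
  define N where "N s = (y s)\<^sup>2 + (z s)\<^sup>2" for s
  define N' where "N' s = 2 * y s * z s + 2 * z s * (- P s * z s - Q s * y s)" for s
  have N0: "N s \<ge> 0" for s unfolding N_def by simp
  have Pb0: "Pb \<ge> 0" using Pb[of t0] by auto
  have Qb0: "Qb \<ge> 0" using Qb[of t0] by auto
  have L0: "L \<ge> 0" unfolding L_def using Pb0 Qb0 by simp
  have E1: "E \<ge> 1" unfolding E_def using L0 T by simp
  have dyz: "(y has_real_derivative z s) (at s within {a..b})"
      "(z has_real_derivative (- P s * z s - Q s * y s)) (at s within {a..b})"
    if "t0 \<le> a" "s \<in> {a..b}" for a b s
  proof -
    have s: "s \<ge> t0" using that by auto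
    have sub: "{a..b} \<subseteq> {t0..}" using that by auto
    show "(y has_real_derivative z s) (at s within {a..b})"
      using sol s sub unfolding sol2_def by (meson has_field_derivative_subset)
    show "(z has_real_derivative (- P s * z s - Q s * y s)) (at s within {a..b})"
      using sol s sub unfolding sol2_def by (meson has_field_derivative_subset)
  qed
  have gron: "N s \<le> exp (L * (s - a)) * N a" "exp (- (L * (s - a))) * N a \<le> N s"
    if "t0 \<le> a" "s \<in> {a..b}" for a b s
  proof -
    have d: "(N has_real_derivative N' x) (at x within {a..b})" if "x \<in> {a..b}" for x
      unfolding N_def N'_def
      by (rule derivative_eq_intros dyz[OF \<open>t0 \<le> a\<close> that] refl | simp add: algebra_simps)+
    have bd: "\<bar>N' x\<bar> \<le> L * N x" if "x \<in> {a..b}" for x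
      unfolding N'_def N_def L_def using that \<open>t0 \<le> a\<close>
      by (intro N_deriv_bound Pb Qb) auto
    show "N s \<le> exp (L * (s - a)) * N a" "exp (- (L * (s - a))) * N a \<le> N s"
      using gronwall2[OF d bd that(2)] by auto
  qed
  have gron_up: "N s \<le> E * N a" if "t0 \<le> a" "a \<le> s" "s \<le> a + T" for a s
  proof -
    have "N s \<le> exp (L * (s - a)) * N a" using gron(1)[of a s "a + T"] that by auto
    also have "\<dots> \<le> E * N a" unfolding E_def using that L0 N0
      by (intro mult_right_mono) (auto intro: mult_left_mono)
    finally show ?thesis .
  qed
  have gron_low: "exp (- (L * T)) * N a \<le> N s" if "t0 \<le> a" "a \<le> s" "s \<le> a + T" for a s
  proof -
    have "exp (- (L * T)) * N a \<le> exp (- (L * (s - a))) * N a" using that L0 N0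
      by (intro mult_right_mono) (auto intro: mult_left_mono)
    also have "\<dots> \<le> N s" using gron(2)[of a s "a + T"] that by auto
    finally show ?thesis .
  qed
  define n0 where "n0 = nat \<lceil>t0 / T\<rceil>"
  define \<tau> where "\<tau> n = real n * T" for n
  have tau_mono: "\<tau> m \<le> \<tau> n" if "m \<le> n" for m n
    unfolding \<tau>_def using that T by (intro mult_right_mono) auto
  have tau_Suc: "\<tau> (Suc n) = \<tau> n + T" for n unfolding \<tau>_def by (simp add: algebra_simps)
  have cei: "real n0 = real_of_int \<lceil>t0 / T\<rceil>" unfolding n0_def using t0 T by simp
  have tau0: "t0 \<le> \<tau> n0"
  proof -
    have "t0 / T \<le> real n0" unfolding cei by simp
    then show ?thesis unfolding \<tau>_def using T by (simp add: divide_le_eq)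
  qed
  have tau0': "\<tau> n0 \<le> t0 + T"
  proof -
    have "real n0 \<le> t0 / T + 1" unfolding cei by linarith
    then have "real n0 * T \<le> (t0 / T + 1) * T" using T by (intro mult_right_mono) auto
    then show ?thesis unfolding \<tau>_def using T by (simp add: algebra_simps)
  qed
  have tau_ge: "t0 \<le> \<tau> n" if "n0 \<le> n" for n using tau0 tau_mono[OF that] by linarith
  define F where "F u v = p 0 * u\<^sup>2 + 2 * q 0 * u * v + r 0 * v\<^sup>2" for u v
  define A where "A n = F (y (\<tau> n)) (z (\<tau> n))" for n
  define \<gamma> where "\<gamma> = exp (- (L * T))"
  have An: "A n \<le> h * N (\<tau> n)" "m0 * N (\<tau> n) \<le> A n" for n
    unfolding A_def F_def N_def using F0 by auto
  have A0: "A n \<ge> 0" for n using An(2)[of n] m0 N0[of "\<tau> n"] by (smt (verit) zero_le_mult_iff)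
  have step: "A (Suc n) \<le> A n - \<delta> * \<gamma> * T * N (\<tau> n)" if n: "n0 \<le> n" for n
  proof -
    have a: "t0 \<le> \<tau> n" using tau_ge[OF n] .
    have "p T * (y (\<tau> n + T))\<^sup>2 + 2 * q T * y (\<tau> n + T) * z (\<tau> n + T) + r T * (z (\<tau> n + T))\<^sup>2
         \<le> p 0 * (y (\<tau> n))\<^sup>2 + 2 * q 0 * y (\<tau> n) * z (\<tau> n) + r 0 * (z (\<tau> n))\<^sup>2
           - \<delta> * \<gamma> * T * ((y (\<tau> n))\<^sup>2 + (z (\<tau> n))\<^sup>2)"
    proof (rule piece[OF T dp dq dr ip iq ir hb _ dyz(1)[OF a] dyz(2)[OF a] _ hD])
      show "h \<ge> 0" using h by simp
      show "\<delta> \<ge> 0" using del by simp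
      fix s assume s: "s \<in> {\<tau> n..\<tau> n + T}"
      show "\<bar>P s - c\<bar> + \<bar>Q s - k (s - \<tau> n)\<bar> \<le> D"
        using D[of n s] s a unfolding \<tau>_def by auto
      show "\<gamma> * ((y (\<tau> n))\<^sup>2 + (z (\<tau> n))\<^sup>2) \<le> (y s)\<^sup>2 + (z s)\<^sup>2"
        using gron_low[OF a, of s] s unfolding \<gamma>_def N_def by auto
    qed auto
    then show ?thesis unfolding A_def F_def N_def tau_Suc per .
  qed
  define \<rho> where "\<rho> = max 0 (1 - \<delta> * \<gamma> * T / h)"
  have rho0: "0 \<le> \<rho>" unfolding \<rho>_def by simp
  have rho1: "\<rho> < 1"
  proof -
    have "\<delta> * \<gamma> * T / h > 0" unfolding \<gamma>_def using del T h by simp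
    then show ?thesis unfolding \<rho>_def by simp
  qed
  have step2: "A (Suc n) \<le> \<rho> * A n" if n: "n0 \<le> n" for n
  proof -
    have "A n / h \<le> N (\<tau> n)" using An(1)[of n] h by (simp add: divide_le_eq mult.commute)
    then have "\<delta> * \<gamma> * T * (A n / h) \<le> \<delta> * \<gamma> * T * N (\<tau> n)"
      unfolding \<gamma>_def using del T by (intro mult_left_mono) auto
    with step[OF n] have "A (Suc n) \<le> (1 - \<delta> * \<gamma> * T / h) * A n" by (simp add: algebra_simps)
    also have "\<dots> \<le> \<rho> * A n" unfolding \<rho>_def using A0[of n] by (intro mult_right_mono) auto
    finally show ?thesis .
  qed
  have geo: "A (n0 + k) \<le> \<rho> ^ k * A n0" for k
  proof (induction k)
    case 0 then show ?case by simp
  next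
    case (Suc k)
    have "A (n0 + Suc k) \<le> \<rho> * A (n0 + k)" using step2[of "n0 + k"] by simp
    also have "\<dots> \<le> \<rho> * (\<rho> ^ k * A n0)" using Suc rho0 by (intro mult_left_mono) auto
    finally show ?case by simp
  qed
  have late: "\<exists>k. N t \<le> E * (\<rho> ^ k * A n0) / m0 \<and> \<tau> (n0 + k) \<le> t \<and> t < \<tau> (n0 + k) + T"
    if t: "\<tau> n0 \<le> t" for t
  proof -
    define n where "n = nat \<lfloor>t / T\<rfloor>"
    have t0': "0 \<le> t" using t0 tau0 t by linarith
    have rn: "real n = real_of_int \<lfloor>t / T\<rfloor>" unfolding n_def using t0' T by simp
    have "real n0 \<le> t / T" using t T unfolding \<tau>_def by (simp add: le_divide_eq)
    then have "real n0 \<le> real n" unfolding rn by (metis le_floor_iff of_int_of_nat_eq of_int_le_iff)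
    then have nn: "n0 \<le> n" by simp
    have l: "\<tau> n \<le> t"
    proof -
      have "real n \<le> t / T" unfolding rn by simp
      then show ?thesis unfolding \<tau>_def using T by (simp add: le_divide_eq)
    qed
    have u: "t < \<tau> n + T"
    proof -
      have "t / T < real n + 1" unfolding rn by linarith
      then have "t < (real n + 1) * T" using T by (simp add: divide_less_eq)
      then show ?thesis unfolding \<tau>_def by (simp add: algebra_simps)
    qed
    have "N t \<le> E * N (\<tau> n)" using gron_up[OF tau_ge[OF nn] l] u by simp
    also have "\<dots> \<le> E * (A n / m0)"
      using An(2)[of n] m0 E1 by (intro mult_left_mono) (auto simp: le_divide_eq mult.commute)
    also have "\<dots> \<le> E * (\<rho> ^ (n - n0) * A n0 / m0)"
      using geo[of "n - n0"] nn m0 E1 by (intro mult_left_mono divide_right_mono) auto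
    finally show ?thesis using l u nn by (intro exI[of _ "n - n0"]) auto
  qed
  have An0: "A n0 \<le> h * (E * N t0)"
  proof -
    have "N (\<tau> n0) \<le> E * N t0" using gron_up[of t0 "\<tau> n0"] tau0 tau0' by simp
    then show ?thesis using An(1)[of n0] h by (smt (verit) mult_left_mono)
  qed
  show "\<forall>t\<ge>t0. (y t)\<^sup>2 + (z t)\<^sup>2 \<le> (exp ((1 + Qb + 2 * Pb) * T) + exp ((1 + Qb + 2 * Pb) * T) * exp ((1 + Qb + 2 * Pb) * T) * h / m0) * ((y t0)\<^sup>2 + (z t0)\<^sup>2)"
  proof (intro allI impI)
    fix t assume t: "t \<ge> t0"
    have b2: "E * E * h / m0 * N t0 \<ge> 0" using E1 h m0 N0[of t0] by simp
    have b1: "E * N t0 \<ge> 0" using E1 N0[of t0] by simp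
    have "N t \<le> (E + E * E * h / m0) * N t0"
    proof (cases "t \<le> \<tau> n0")
      case True
      then have "N t \<le> E * N t0" using gron_up[of t0 t] t tau0' by simp
      then show ?thesis using b2 by (simp add: algebra_simps)
    next
      case False
      then have "\<tau> n0 \<le> t" by simp
      then obtain k where k: "N t \<le> E * (\<rho> ^ k * A n0) / m0" using late by blast
      have "\<rho> ^ k \<le> 1" using rho0 rho1 by (simp add: power_le_one)
      then have "\<rho> ^ k * A n0 \<le> A n0" using A0[of n0] using mult_right_mono[of "\<rho> ^ k" 1 "A n0"] by simp
      then have "N t \<le> E * A n0 / m0" using k E1 m0
        by (smt (verit) divide_right_mono mult_left_mono)
      also have "\<dots> \<le> E * (h * (E * N t0)) / m0" using An0 E1 m0
        by (intro divide_right_mono mult_left_mono) auto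
      also have "\<dots> = E * E * h / m0 * N t0" by simp
      finally show ?thesis using b1 by (simp add: algebra_simps)
    qed
    then show "(y t)\<^sup>2 + (z t)\<^sup>2 \<le> (exp ((1 + Qb + 2 * Pb) * T) + exp ((1 + Qb + 2 * Pb) * T) * exp ((1 + Qb + 2 * Pb) * T) * h / m0) * ((y t0)\<^sup>2 + (z t0)\<^sup>2)"
      unfolding N_def E_def L_def .
  qed
  show "((\<lambda>t. (y t)\<^sup>2 + (z t)\<^sup>2) \<longlongrightarrow> 0) at_top"
    unfolding tendsto_iff
  proof (intro allI impI)
    fix e :: real assume e: "e > 0"
    define B where "B = E * A n0 / m0"
    have "(\<lambda>k. \<rho> ^ k * B) \<longlonglongrightarrow> 0 * B"
      using LIMSEQ_power_zero[of \<rho>] rho0 rho1 by (intro tendsto_mult) auto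
    then have "eventually (\<lambda>k. \<rho> ^ k * B < e) sequentially"
      using e by (simp add: order_tendstoD(2))
    then obtain K where K: "\<And>k. k \<ge> K \<Longrightarrow> \<rho> ^ k * B < e"
      unfolding eventually_sequentially by blast
    show "\<forall>\<^sub>F t in at_top. dist ((y t)\<^sup>2 + (z t)\<^sup>2) 0 < e"
      unfolding eventually_at_top_linorder
    proof (intro exI[of _ "\<tau> (n0 + K)"] allI impI)
      fix t assume t: "t \<ge> \<tau> (n0 + K)"
      then have "\<tau> n0 \<le> t" using tau_mono[of n0 "n0 + K"] by simp
      then obtain k where k: "N t \<le> E * (\<rho> ^ k * A n0) / m0" "\<tau> (n0 + k) \<le> t" "t < \<tau> (n0 + k) + T"
        using late by blast
      have kK: "K \<le> k"
      proof (rule ccontr)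
        assume "\<not> K \<le> k"
        then have "Suc (n0 + k) \<le> n0 + K" by simp
        from tau_mono[OF this] have "\<tau> (n0 + k) + T \<le> \<tau> (n0 + K)" by (simp add: tau_Suc)
        with t k(3) show False by simp
      qed
      have "\<rho> ^ k \<le> \<rho> ^ K" using kK rho0 rho1 by (simp add: power_decreasing)
      then have "\<rho> ^ k * B \<le> \<rho> ^ K * B"
        unfolding B_def using A0[of n0] E1 m0 by (intro mult_right_mono) auto
      moreover have "N t \<le> \<rho> ^ k * B" using k(1) unfolding B_def by (simp add: algebra_simps)
      ultimately have "N t < e" using K[of K] by simp
      then show "dist ((y t)\<^sup>2 + (z t)\<^sup>2) 0 < e" unfolding N_def by simp
    qed
  qed
qed


lemma vec2_norm: "norm (x :: complex^2) = sqrt ((cmod (x$1))\<^sup>2 + (cmod (x$2))\<^sup>2)"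
  by (simp add: norm_vec_def L2_set_def sum_2)

lemma mat_bound:
  fixes M :: "complex^2^2" and u v :: real
  shows "(Re (M$1$1) * u + Re (M$1$2) * v)\<^sup>2 + (Re (M$2$1) * u + Re (M$2$2) * v)\<^sup>2
          \<le> (spec_norm M)\<^sup>2 * (u\<^sup>2 + v\<^sup>2)"
proof -
  define w :: "complex^2" where "w = vector [complex_of_real u, complex_of_real v]"
  have nw: "norm w = sqrt (u\<^sup>2 + v\<^sup>2)" unfolding w_def vec2_norm by simp
  have c1: "(M *v w) $ 1 = M$1$1 * u + M$1$2 * v"
    and c2: "(M *v w) $ 2 = M$2$1 * u + M$2$2 * v"
    unfolding w_def matrix_vector_mult_def by (simp_all add: sum_2)
  have "(Re (M$1$1) * u + Re (M$1$2) * v)\<^sup>2 + (Re (M$2$1) * u + Re (M$2$2) * v)\<^sup>2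
      \<le> (cmod ((M *v w) $ 1))\<^sup>2 + (cmod ((M *v w) $ 2))\<^sup>2"
  proof -
    have "(Re ((M *v w) $ i))\<^sup>2 \<le> (cmod ((M *v w) $ i))\<^sup>2" for i
      using abs_Re_le_cmod[of "(M *v w) $ i"] by (simp add: abs_le_square_iff[symmetric])
    from add_mono[OF this[of 1] this[of 2]] show ?thesis unfolding c1 c2
      by simp
  qed
  also have "\<dots> = (norm (M *v w))\<^sup>2" by (simp add: vec2_norm)
  also have "\<dots> \<le> (spec_norm M * norm w)\<^sup>2"
    unfolding spec_norm_def
    by (intro power_mono onorm) (auto intro!: matrix_vector_mul_bounded_linear)
  also have "\<dots> = (spec_norm M)\<^sup>2 * (u\<^sup>2 + v\<^sup>2)" by (simp add: nw power_mult_distrib)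
  finally show ?thesis .
qed


lemma herm_entries:
  fixes M :: "complex^2^2"
  assumes "hermitian M"
  shows "Re (M$2$1) = Re (M$1$2)"
proof -
  have "adj M $ 2 $ 1 = M $ 2 $ 1" using assms unfolding hermitian_def by simp
  then have "cnj (M$1$2) = M$2$1" unfolding adj_def by simp
  then have "Re (cnj (M$1$2)) = Re (M$2$1)" by simp
  then show ?thesis by simp
qed

lemma H_entries:
  fixes M M' :: "complex^2^2"
  assumes herm: "hermitian M"
    and eq: "M' + M ** Amat alpha beta phi t mu + adj (Amat alpha beta phi t mu) ** M = - mat 1"
  shows "Re (M'$1$1) = -1 + 2 * Re (M$1$2) * (beta * mu^2 + mu * phi t)"
    and "Re (M'$1$2) = - Re (M$1$1) + Re (M$1$2) * (alpha * mu) + Re (M$2$2) * (beta * mu^2 + mu * phi t)"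
    and "Re (M'$2$2) = -1 - 2 * Re (M$1$2) + 2 * Re (M$2$2) * (alpha * mu)"
proof -
  have h21: "Re (M$2$1) = Re (M$1$2)" by (rule herm_entries[OF herm])
  have e: "(M' + M ** Amat alpha beta phi t mu + adj (Amat alpha beta phi t mu) ** M) $ i $ j = (- mat 1 :: complex^2^2) $ i $ j" for i j
    using eq by simp
  note defs = matrix_matrix_mult_def adj_def Amat_def mat_def sum_2 vector_2
  from arg_cong[OF e[of 1 1], of Re] show "Re (M'$1$1) = -1 + 2 * Re (M$1$2) * (beta * mu^2 + mu * phi t)"
    using h21 by (simp add: defs algebra_simps)
  from arg_cong[OF e[of 1 2], of Re] show "Re (M'$1$2) = - Re (M$1$1) + Re (M$1$2) * (alpha * mu) + Re (M$2$2) * (beta * mu^2 + mu * phi t)"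
    using h21 by (simp add: defs algebra_simps)
  from arg_cong[OF e[of 2 2], of Re] show "Re (M'$2$2) = -1 - 2 * Re (M$1$2) + 2 * Re (M$2$2) * (alpha * mu)"
    using h21 by (simp add: defs algebra_simps)
qed


lemma posdef_real:
  fixes M :: "complex^2^2" and u v :: real
  assumes pd: "pos_def M" and nz: "u \<noteq> 0 \<or> v \<noteq> 0"
  shows "u * (Re (M$1$1) * u + Re (M$1$2) * v) + v * (Re (M$2$1) * u + Re (M$2$2) * v) > 0"
proof -
  define w :: "complex^2" where "w = vector [complex_of_real u, complex_of_real v]"
  have "w \<noteq> 0" using nz unfolding w_def by (auto simp: vec_eq_iff forall_2)
  with pd have "Re (\<Sum>i\<in>UNIV. cnj (w $ i) * (M *v w) $ i) > 0" unfolding pos_def_def by blast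
  then show ?thesis unfolding w_def matrix_vector_mult_def by (simp add: sum_2 algebra_simps)
qed

lemma posdef2:
  fixes p q r :: real
  assumes pos: "\<And>u v. u \<noteq> 0 \<or> v \<noteq> 0 \<Longrightarrow> p * u\<^sup>2 + 2 * q * u * v + r * v\<^sup>2 > 0"
  shows "\<exists>m>0. \<forall>u v. m * (u\<^sup>2 + v\<^sup>2) \<le> p * u\<^sup>2 + 2 * q * u * v + r * v\<^sup>2"
proof -
  have p: "p > 0" using pos[of 1 0] by simp
  have r: "r > 0" using pos[of 0 1] by simp
  have "p * (-q)\<^sup>2 + 2 * q * (-q) * p + r * p\<^sup>2 > 0" using pos[of "-q" p] p by simp
  then have "p * (p * r - q\<^sup>2) > 0" by (simp add: power2_eq_square algebra_simps)
  then have d: "p * r - q\<^sup>2 > 0" using p by (simp add: zero_less_mult_iff)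
  define m where "m = (p * r - q\<^sup>2) / (p + r)"
  have m: "m > 0" unfolding m_def using d p r by simp
  have pm: "p - m > 0"
  proof -
    have "p - m = (p\<^sup>2 + q\<^sup>2) / (p + r)" unfolding m_def using p r
      by (simp add: field_simps power2_eq_square)
    then show ?thesis using p r by (simp add: add_pos_nonneg)
  qed
  have det: "(p - m) * (r - m) - q\<^sup>2 = m\<^sup>2"
  proof -
    have "m * (p + r) = p * r - q\<^sup>2" unfolding m_def using p r by simp
    moreover have "(p - m) * (r - m) - q\<^sup>2 = (p * r - q\<^sup>2) - m * (p + r) + m\<^sup>2"
      by (simp add: power2_eq_square algebra_simps)
    ultimately show ?thesis by simp
  qed
  show ?thesis
  proof (intro exI[of _ m] conjI allI m)
    fix u v :: real
    have "(p - m) * ((p - m) * u\<^sup>2 + 2 * q * u * v + (r - m) * v\<^sup>2)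
        = ((p - m) * u + q * v)\<^sup>2 + ((p - m) * (r - m) - q\<^sup>2) * v\<^sup>2"
      by (simp add: power2_eq_square algebra_simps)
    also have "\<dots> \<ge> 0" unfolding det by simp
    finally have "(p - m) * u\<^sup>2 + 2 * q * u * v + (r - m) * v\<^sup>2 \<ge> 0"
      using pm by (simp add: zero_le_mult_iff)
    then show "m * (u\<^sup>2 + v\<^sup>2) \<le> p * u\<^sup>2 + 2 * q * u * v + r * v\<^sup>2"
      by (simp add: algebra_simps)
  qed
qed

lemma cs_bounds:
  fixes X Y u v h :: real
  assumes b: "X\<^sup>2 + Y\<^sup>2 \<le> h\<^sup>2 * (u\<^sup>2 + v\<^sup>2)" and h: "h \<ge> 0"
  shows "\<bar>Y\<bar> \<le> h * sqrt (u\<^sup>2 + v\<^sup>2)" and "\<bar>u * X + v * Y\<bar> \<le> h * (u\<^sup>2 + v\<^sup>2)"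
proof -
  have "\<bar>Y\<bar> = sqrt (Y\<^sup>2)" by simp
  also have "\<dots> \<le> sqrt (h\<^sup>2 * (u\<^sup>2 + v\<^sup>2))" using b by (intro real_sqrt_le_mono) (smt (verit) zero_le_power2)
  also have "\<dots> = h * sqrt (u\<^sup>2 + v\<^sup>2)" using h by (simp add: real_sqrt_mult)
  finally show "\<bar>Y\<bar> \<le> h * sqrt (u\<^sup>2 + v\<^sup>2)" .
  have "(u * X + v * Y)\<^sup>2 \<le> (u\<^sup>2 + v\<^sup>2) * (X\<^sup>2 + Y\<^sup>2)"
  proof -
    have "(u\<^sup>2 + v\<^sup>2) * (X\<^sup>2 + Y\<^sup>2) - (u * X + v * Y)\<^sup>2 = (u * Y - v * X)\<^sup>2"
      by (simp add: power2_eq_square algebra_simps)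
    then show ?thesis by (smt (verit) zero_le_power2)
  qed
  also have "\<dots> \<le> (u\<^sup>2 + v\<^sup>2) * (h\<^sup>2 * (u\<^sup>2 + v\<^sup>2))" using b by (intro mult_left_mono) auto
  also have "\<dots> = (h * (u\<^sup>2 + v\<^sup>2))\<^sup>2" by (simp add: power2_eq_square algebra_simps)
  finally show "\<bar>u * X + v * Y\<bar> \<le> h * (u\<^sup>2 + v\<^sup>2)"
    using h by (simp add: abs_le_square_iff[symmetric])
qed


lemma spec_norm_le: "spec_norm (M :: complex^2^2) \<le> 4 * norm M"
  unfolding spec_norm_def
proof (rule onorm_le)
  fix x :: "complex^2"
  have "norm (M *v x) \<le> (\<Sum>i\<in>UNIV. norm ((M *v x) $ i))"
    unfolding norm_vec_def by (rule L2_set_le_sum) auto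
  also have "\<dots> \<le> (\<Sum>i\<in>(UNIV::2 set). \<Sum>j\<in>(UNIV::2 set). norm M * norm x)"
  proof (rule sum_mono)
    fix i :: 2
    have "norm ((M *v x) $ i) \<le> (\<Sum>j\<in>UNIV. norm (M $ i $ j * x $ j))"
      unfolding matrix_vector_mult_def by (simp add: norm_sum)
    also have "\<dots> \<le> (\<Sum>j\<in>(UNIV::2 set). norm M * norm x)"
    proof (rule sum_mono)
      fix j :: 2
      have "norm (M $ i $ j) \<le> norm M"
        using Finite_Cartesian_Product.norm_nth_le[of "M $ i" j] Finite_Cartesian_Product.norm_nth_le[of M i] by linarith
      then show "norm (M $ i $ j * x $ j) \<le> norm M * norm x"
        unfolding norm_mult by (intro mult_mono Finite_Cartesian_Product.norm_nth_le) auto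
    qed
    finally show "norm ((M *v x) $ i) \<le> (\<Sum>j\<in>(UNIV::2 set). norm M * norm x)" .
  qed
  also have "\<dots> = 4 * norm M * norm x" by simp
  finally show "norm (M *v x) \<le> 4 * norm M * norm x" .
qed


lemma phi_shift:
  assumes per: "\<And>t. phi (t + T) = phi t"
  shows "phi (t + real n * T) = phi t"
proof (induction n)
  case 0 then show ?case by simp
next
  case (Suc n)
  have "phi (t + real (Suc n) * T) = phi ((t + real n * T) + T)" by (simp add: algebra_simps)
  also have "\<dots> = phi t" using per Suc by simp
  finally show ?case .
qed

lemma per_bound:
  fixes phi :: "real \<Rightarrow> real"
  assumes T: "T > 0" and c: "continuous_on UNIV phi" and per: "\<And>t. phi (t + T) = phi t"
  shows "\<exists>B. \<forall>s\<ge>0. \<bar>phi s\<bar> \<le> B"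
proof -
  have "compact (phi ` {0..T})"
    by (rule compact_continuous_image) (use c continuous_on_subset in auto)
  then have "bounded (phi ` {0..T})" by (rule compact_imp_bounded)
  then obtain B where B0: "\<forall>x\<in>phi ` {0..T}. norm x \<le> B"
    unfolding Elementary_Metric_Spaces.bounded_iff by blast
  then have B: "\<And>x. x \<in> {0..T} \<Longrightarrow> \<bar>phi x\<bar> \<le> B" by auto
  show ?thesis
  proof (intro exI allI impI)
    fix s :: real assume s: "s \<ge> 0"
    define n where "n = nat \<lfloor>s / T\<rfloor>"
    have rn: "real n = real_of_int \<lfloor>s / T\<rfloor>" unfolding n_def using s T by simp
    have "real n \<le> s / T" "s / T < real n + 1" unfolding rn by linarith+
    then have "real n * T \<le> s" "s < real n * T + T" using T
      by (simp_all add: le_divide_eq divide_less_eq algebra_simps)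
    then have "s - real n * T \<in> {0..T}" by auto
    moreover have "phi s = phi (s - real n * T)" using phi_shift[of phi T "s - real n * T" n] per by simp
    ultimately show "\<bar>phi s\<bar> \<le> B" using B by simp
  qed
qed

lemma Re_deriv:
  fixes H H' :: "real \<Rightarrow> complex^2^2"
  assumes "(H has_vector_derivative H' t) (at t within S)"
  shows "((\<lambda>t. Re (H t $ i $ j)) has_real_derivative Re (H' t $ i $ j)) (at t within S)"
proof -
  have bl: "bounded_linear (\<lambda>M::complex^2^2. Re (M $ i $ j))"
    using bounded_linear_compose[OF bounded_linear_Re
        bounded_linear_compose[OF bounded_linear_vec_nth[of j] bounded_linear_vec_nth[of i]]] by (simp add: o_def)
  show ?thesis unfolding has_real_derivative_iff_has_vector_derivative
    using bounded_linear.has_vector_derivative[OF bl assms] by simp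
qed


theorem theorem5:
  fixes T alpha beta mu0 mu dalpha dbeta :: real
    and phi dphi :: "real \<Rightarrow> real"
    and H H' :: "real \<Rightarrow> complex^2^2"
  assumes T: "T > 0" and alpha: "alpha > 0" and beta: "beta < 0"
    and phi_cont: "continuous_on UNIV phi"
    and phi_per: "\<And>t. phi (t + T) = phi t"
    and phi_mean: "integral {0..T} phi = 0"
    and ineq: "(1/T) * integral {0..T} (\<lambda>\<tau>. (integral {0..\<tau>} phi)^2)
               > ((1/T) * integral {0..T} (\<lambda>\<tau>. \<tau> * phi \<tau>))^2 - beta"
    and mu0: "mu0 > 0"
    and mu0_stable: "\<And>m. 0 < m \<Longrightarrow> m \<le> mu0 \<Longrightarrow>
                        asymp_stable2 (\<lambda>t. alpha * m) (\<lambda>t. beta * m^2 + m * phi t)"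
    and mu: "0 < mu" "mu \<le> mu0"
    and H_herm: "\<And>t. t \<in> {0..T} \<Longrightarrow> hermitian (H t)"
    and H_deriv: "\<And>t. t \<in> {0..T} \<Longrightarrow> (H has_vector_derivative H' t) (at t within {0..T})"
    and H_eq: "\<And>t. t \<in> {0..T} \<Longrightarrow>
                 H' t + H t ** Amat alpha beta phi t mu + adj (Amat alpha beta phi t mu) ** H t
                   = - mat 1"
    and H_bd: "H 0 = H T" "pos_def (H 0)"
    and dphi_cont: "continuous_on {0..} dphi"
    and dphi_bdd: "bounded (dphi ` {0..})"
    and small1: "mu * (SUP t\<in>{0..}. \<bar>dphi t\<bar>)
                   < 1 / (4 * (SUP t\<in>{0..T}. spec_norm (H t)))"
    and small2: "mu * (\<bar>dbeta\<bar> * mu + \<bar>dalpha\<bar>)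
                   < 1 / (4 * (SUP t\<in>{0..T}. spec_norm (H t)))"
  shows "asymp_stable2 (\<lambda>t. (alpha + dalpha) * mu)
           (\<lambda>t. (beta + dbeta) * mu^2 + mu * (phi t + dphi t))"
proof -
  define h where "h = (SUP t\<in>{0..T}. spec_norm (H t))"
  define sp where "sp = (SUP t\<in>{0..}. \<bar>dphi t\<bar>)"
  obtain Bd where Bd: "\<And>t. t \<in> {0..} \<Longrightarrow> \<bar>dphi t\<bar> \<le> Bd"
    using dphi_bdd unfolding Elementary_Metric_Spaces.bounded_iff by force
  have sp: "\<bar>dphi t\<bar> \<le> sp" if "t \<ge> 0" for t
    unfolding sp_def using Bd that by (intro cSUP_upper bdd_aboveI2[of _ _ Bd]) auto
  have sp0: "sp \<ge> 0" using sp[of 0] by simp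
  have Hc: "continuous_on {0..T} H"
    unfolding continuous_on_eq_continuous_within
    using H_deriv has_vector_derivative_continuous by blast
  have "compact (H ` {0..T})" by (rule compact_continuous_image[OF Hc]) auto
  then have "bounded (H ` {0..T})" by (rule compact_imp_bounded)
  then obtain BH where BH: "\<And>t. t \<in> {0..T} \<Longrightarrow> norm (H t) \<le> BH"
    unfolding Elementary_Metric_Spaces.bounded_iff by (metis imageI)
  have snh: "spec_norm (H t) \<le> h" if "t \<in> {0..T}" for t
    unfolding h_def using that
    by (intro cSUP_upper bdd_aboveI2[of _ _ "4 * BH"])
       (auto intro: order_trans[OF spec_norm_le] simp: BH)
  have sn0: "spec_norm M \<ge> 0" for M :: "complex^2^2"
    unfolding spec_norm_def by (rule onorm_pos_le) simp
  have h: "h > 0"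
  proof (rule ccontr)
    assume "\<not> h > 0"
    then have "1 / (4 * h) \<le> 0" by (simp add: divide_nonpos_nonneg)
    moreover have "mu * sp \<ge> 0" using mu sp0 by simp
    ultimately show False using small1 unfolding h_def[symmetric] sp_def[symmetric] by linarith
  qed
  define D where "D = mu * sp + mu * (\<bar>dbeta\<bar> * mu + \<bar>dalpha\<bar>)"
  define \<delta> where "\<delta> = 1 - 2 * h * D"
  have del: "\<delta> > 0"
  proof -
    have "D < 1 / (4 * h) + 1 / (4 * h)" using small1 small2 unfolding D_def h_def[symmetric] sp_def[symmetric] by linarith
    then have "2 * h * D < 2 * h * (1 / (4 * h) + 1 / (4 * h))" using h by (intro mult_strict_left_mono) auto
    also have "\<dots> = 1" using h by (simp add: field_simps)
    finally show ?thesis unfolding \<delta>_def by simp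
  qed
  define p where "p t = Re (H t $ 1 $ 1)" for t
  define q where "q t = Re (H t $ 1 $ 2)" for t
  define r where "r t = Re (H t $ 2 $ 2)" for t
  define p' where "p' t = Re (H' t $ 1 $ 1)" for t
  define q' where "q' t = Re (H' t $ 1 $ 2)" for t
  define r' where "r' t = Re (H' t $ 2 $ 2)" for t
  define k where "k t = beta * mu^2 + mu * phi t" for t
  define c where "c = alpha * mu"
  have dp: "(p has_real_derivative p' s) (at s within {0..T})" if "s \<in> {0..T}" for s
    unfolding p_def[abs_def] p'_def by (rule Re_deriv[of H H' s, OF H_deriv[OF that]])
  have dq: "(q has_real_derivative q' s) (at s within {0..T})" if "s \<in> {0..T}" for s
    unfolding q_def[abs_def] q'_def by (rule Re_deriv[of H H' s, OF H_deriv[OF that]])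
  have dr: "(r has_real_derivative r' s) (at s within {0..T})" if "s \<in> {0..T}" for s
    unfolding r_def[abs_def] r'_def by (rule Re_deriv[of H H' s, OF H_deriv[OF that]])
  note HE = H_entries[OF H_herm H_eq]
  have ip: "p' s = -1 + 2 * q s * k s" if "s \<in> {0..T}" for s
    unfolding p'_def q_def k_def using HE(1)[OF that that] .
  have iq: "q' s = - p s + q s * c + r s * k s" if "s \<in> {0..T}" for s
    unfolding p_def q'_def q_def r_def k_def c_def using HE(2)[OF that that] .
  have ir: "r' s = -1 - 2 * q s + 2 * r s * c" if "s \<in> {0..T}" for s
    unfolding q_def r'_def r_def c_def using HE(3)[OF that that] .
  have per: "p T = p 0" "q T = q 0" "r T = r 0" unfolding p_def q_def r_def H_bd(1) by auto
  have T0: "0 \<in> {0..T}" using T by simp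
  have mb: "(Re (H s $1$1) * u + Re (H s $1$2) * v)\<^sup>2 + (Re (H s $2$1) * u + Re (H s $2$2) * v)\<^sup>2
          \<le> h\<^sup>2 * (u\<^sup>2 + v\<^sup>2)" if "s \<in> {0..T}" for s u v
  proof -
    have "(spec_norm (H s))\<^sup>2 \<le> h\<^sup>2" using snh[OF that] sn0[of "H s"] by (simp add: power_mono)
    then have "(spec_norm (H s))\<^sup>2 * (u\<^sup>2 + v\<^sup>2) \<le> h\<^sup>2 * (u\<^sup>2 + v\<^sup>2)"
      by (intro mult_right_mono) auto
    with mat_bound[of "H s" u v] show ?thesis by linarith
  qed
  have hb: "\<bar>q s * u + r s * v\<bar> \<le> h * sqrt (u\<^sup>2 + v\<^sup>2)" if "s \<in> {0..T}" for s u v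
    using cs_bounds(1)[OF mb[OF that] less_imp_le[OF h]] herm_entries[OF H_herm[OF that]]
    unfolding q_def r_def by simp
  have F0up: "p 0 * u\<^sup>2 + 2 * q 0 * u * v + r 0 * v\<^sup>2 \<le> h * (u\<^sup>2 + v\<^sup>2)" for u v
  proof -
    have "\<bar>u * (Re (H 0 $1$1) * u + Re (H 0 $1$2) * v) + v * (Re (H 0 $2$1) * u + Re (H 0 $2$2) * v)\<bar>
        \<le> h * (u\<^sup>2 + v\<^sup>2)"
      by (rule cs_bounds(2)[OF mb[OF T0] less_imp_le[OF h]])
    then show ?thesis using herm_entries[OF H_herm[OF T0]] unfolding p_def q_def r_def
      by (simp add: power2_eq_square algebra_simps)
  qed
  have "\<exists>m>0. \<forall>u v. m * (u\<^sup>2 + v\<^sup>2) \<le> p 0 * u\<^sup>2 + 2 * q 0 * u * v + r 0 * v\<^sup>2"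
  proof (rule posdef2)
    fix u v :: real assume "u \<noteq> 0 \<or> v \<noteq> 0"
    from posdef_real[OF H_bd(2) this]
    show "p 0 * u\<^sup>2 + 2 * q 0 * u * v + r 0 * v\<^sup>2 > 0"
      using herm_entries[OF H_herm[OF T0]] unfolding p_def q_def r_def
      by (simp add: power2_eq_square algebra_simps)
  qed
  then obtain m0 where m0: "m0 > 0" and F0low: "\<And>u v. m0 * (u\<^sup>2 + v\<^sup>2) \<le> p 0 * u\<^sup>2 + 2 * q 0 * u * v + r 0 * v\<^sup>2"
    by blast
  obtain Bp where Bp: "\<And>s. s \<ge> 0 \<Longrightarrow> \<bar>phi s\<bar> \<le> Bp" using per_bound[OF T phi_cont phi_per] by blast
  define P where "P = (\<lambda>t::real. (alpha + dalpha) * mu)"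
  define Q where "Q = (\<lambda>t. (beta + dbeta) * mu^2 + mu * (phi t + dphi t))"
  define Pb where "Pb = \<bar>alpha + dalpha\<bar> * mu"
  define Qb where "Qb = \<bar>beta + dbeta\<bar> * mu^2 + mu * (Bp + sp)"
  define C where "C = exp ((1 + Qb + 2 * Pb) * T) + exp ((1 + Qb + 2 * Pb) * T) * exp ((1 + Qb + 2 * Pb) * T) * h / m0"
  have C0: "C > 0" unfolding C_def using h m0 by (simp add: add_pos_nonneg)
  have res: "(\<forall>t\<ge>t0. (y t)\<^sup>2 + (z t)\<^sup>2 \<le> C * ((y t0)\<^sup>2 + (z t0)\<^sup>2))
       \<and> ((\<lambda>t. (y t)\<^sup>2 + (z t)\<^sup>2) \<longlongrightarrow> 0) at_top"
    if t0: "t0 \<ge> 0" and sol: "sol2 P Q t0 y z" for t0 y z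
  proof -
    have Dc: "\<bar>P s - c\<bar> + \<bar>Q s - k (s - real n * T)\<bar> \<le> D"
      if "real n * T \<le> s" "s \<le> real n * T + T" "t0 \<le> s" for n s
    proof -
      have s0: "s \<ge> 0" using that t0 by simp
      have "phi (s - real n * T) = phi s" using phi_shift[of phi T "s - real n * T" n] phi_per by simp
      then have "Q s - k (s - real n * T) = dbeta * mu^2 + mu * dphi s"
        unfolding Q_def k_def by (simp add: algebra_simps)
      then have "\<bar>Q s - k (s - real n * T)\<bar> \<le> \<bar>dbeta\<bar> * mu^2 + mu * sp"
        using sp[OF s0] mu by (simp add: abs_mult order_trans[OF abs_triangle_ineq] add_mono mult_left_mono)
      moreover have "\<bar>P s - c\<bar> = \<bar>dalpha\<bar> * mu" unfolding P_def c_def using mu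
        by (simp add: algebra_simps abs_mult)
      ultimately show ?thesis unfolding D_def by (simp add: algebra_simps power2_eq_square)
    qed
    have Pbs: "\<bar>P s\<bar> \<le> Pb" for s unfolding P_def Pb_def using mu by (simp add: abs_mult)
    have Qbs: "\<bar>Q s\<bar> \<le> Qb" if "s \<ge> t0" for s
    proof -
      have s0: "s \<ge> 0" using that t0 by simp
      have "\<bar>phi s + dphi s\<bar> \<le> Bp + sp" using Bp[OF s0] sp[OF s0] by simp
      then have "mu * \<bar>phi s + dphi s\<bar> \<le> mu * (Bp + sp)" using mu by (intro mult_left_mono) auto
      then show ?thesis unfolding Q_def Qb_def using mu
        by (simp add: abs_mult order_trans[OF abs_triangle_ineq] add_mono)
    qed
    show ?thesis
      using core[OF T dp dq dr ip iq ir per hb h F0low F0up m0 Dc _ del Pbs Qbs t0 sol]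
      unfolding \<delta>_def C_def by simp
  qed
  show ?thesis
    unfolding asymp_stable2_def P_def[symmetric] Q_def[symmetric]
  proof (rule allI, rule impI, rule conjI)
    fix t0 :: real assume t0: "t0 \<ge> 0"
    show "\<forall>\<epsilon>>0. \<exists>\<delta>>0. \<forall>y z. sol2 P Q t0 y z \<and> norm (y t0, z t0) < \<delta> \<longrightarrow>
              (\<forall>t\<ge>t0. norm (y t, z t) < \<epsilon>)"
    proof (intro allI impI)
      fix \<epsilon> :: real assume e: "\<epsilon> > 0"
      show "\<exists>\<delta>>0. \<forall>y z. sol2 P Q t0 y z \<and> norm (y t0, z t0) < \<delta> \<longrightarrow>
              (\<forall>t\<ge>t0. norm (y t, z t) < \<epsilon>)"
      proof -
        have pos: "\<epsilon> / sqrt C > 0" using e C0 by simp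
        have "\<forall>y z. sol2 P Q t0 y z \<and> norm (y t0, z t0) < \<epsilon> / sqrt C \<longrightarrow>
              (\<forall>t\<ge>t0. norm (y t, z t) < \<epsilon>)"
        proof (intro allI impI)
        fix y z t assume yz: "sol2 P Q t0 y z \<and> norm (y t0, z t0) < \<epsilon> / sqrt C" and t: "t \<ge> t0"
        have "sqrt ((y t0)\<^sup>2 + (z t0)\<^sup>2) < \<epsilon> / sqrt C" using yz by (simp add: norm_Pair)
        then have "sqrt ((y t0)\<^sup>2 + (z t0)\<^sup>2) * sqrt C < \<epsilon>" using C0 by (simp add: less_divide_eq)
        then have "sqrt (C * ((y t0)\<^sup>2 + (z t0)\<^sup>2)) < \<epsilon>" by (simp add: real_sqrt_mult mult.commute)
        moreover have "sqrt ((y t)\<^sup>2 + (z t)\<^sup>2) \<le> sqrt (C * ((y t0)\<^sup>2 + (z t0)\<^sup>2))"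
          using res[OF t0] yz t by (intro real_sqrt_le_mono) auto
        ultimately have "sqrt ((y t)\<^sup>2 + (z t)\<^sup>2) < \<epsilon>" by linarith
        then show "norm (y t, z t) < \<epsilon>" by (simp add: norm_Pair)
        qed
        then show ?thesis using pos by blast
      qed
    qed
    show "\<exists>\<delta>>0. \<forall>y z. sol2 P Q t0 y z \<and> norm (y t0, z t0) < \<delta> \<longrightarrow>
              ((\<lambda>t. (y t, z t)) \<longlongrightarrow> 0) at_top"
    proof (intro exI[of _ 1] conjI allI impI)
      fix y z assume yz: "sol2 P Q t0 y z \<and> norm (y t0, z t0) < 1"
      have "((\<lambda>t. sqrt ((y t)\<^sup>2 + (z t)\<^sup>2)) \<longlongrightarrow> sqrt 0) at_top"
        using res[OF t0] yz by (intro tendsto_real_sqrt) auto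
      then have "((\<lambda>t. norm (y t, z t)) \<longlongrightarrow> 0) at_top" by (simp add: norm_Pair)
      then show "((\<lambda>t. (y t, z t)) \<longlongrightarrow> 0) at_top" by (simp add: tendsto_norm_zero_iff)
    qed simp
  qed
qed

end
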